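(* Let $f(n), g(n)$ be as below, and define $F_1(x)=\sum_{n\text{ odd}} f(n)x^n/n!$, $F_2(x)=\sum_{n\text{ even}} f(n)x^n/n!$, $G_1(x)=\sum_{n\text{ odd}} g(n)x^n/n!$, $G_2(x)=\sum_{n\text{ even}} g(n)x^n/n!$. Then \[ F_1'=F_2^2,\quad F_2'=F_1F_2+G_1,\quad G_1'=F_2(F_2-G_2)+F_2,\quad G_2'=F_2(F_1-G_1)+G_1, \] with $F_1(0)=G_1(0)=0$, $F_2(0)=G_2(0)=1$, and, writing $\Delta(x)=3\cos x+4-\cosh(\sqrt3 x)$, \[ F_1=\frac{\sqrt3\sinh(\sqrt3x)+3\sin x}{\Delta},\qquad F_2=\frac{2\sqrt3\sin(\tfrac12x)\sinh(\tfrac12\sqrt3x)+6\cos(\tfrac12x)\cosh(\tfrac12\sqrt3x)}{\Delta}, \] \[ G_1=\frac{4\sqrt3\cos(\tfrac12x)\sinh(\tfrac12\sqrt3x)}{\Delta},\qquad G_2=\frac{6\cos(\tfrac12x)\cosh(\tfrac12\sqrt3x)+2\sqrt3\sin(\tfrac12x)\sinh(\tfrac12\sqrt3x)+2-2\cosh(\sqrt3x)}{\Delta}. \]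
   Context: $f(n)$ is the number of permutations $\pi_1\cdots\pi_n$ of $[n]$ with every valley index even and every peak index odd (index $i\in\{2,\dots,n-1\}$ is a peak if $\pi_{i-1}<\pi_i>\pi_{i+1}$, a valley if $\pi_{i-1}>\pi_i<\pi_{i+1}$); $g(n)$ is the number of those that end with an ascent ($\pi_{n-1}<\pi_n$); $f(0)=g(0)=1$. Equivalently $f,g$ are determined by the recurrences: for $n\ge0$, $f(n+1)=\sum_{k=0}^{\lfloor (n-1)/2\rfloor}\binom{n}{2k}f(2k)f(n-2k)+[f(n)\text{ if } n \text{ even}, g(n)\text{ if } n\text{ odd}]$ and $g(n+1)=\sum_{k=0}^{\lfloor (n-2)/2\rfloor}\binom{n}{2k}f(2k)[f(n-2k)-g(n-2k)]+[f(n)\text{ if } n \text{ even}, g(n)\text{ if } n\text{ odd}]$. *)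

theory Defs
  imports Complex_Main "HOL-Computational_Algebra.Formal_Power_Series"
begin

text \<open>The index bound k \<le> floor((n-1)/2) is written 2*k+1 \<le> n, and
  k \<le> floor((n-2)/2) is written 2*k+2 \<le> n (empty sums when n is small).\<close>

function pv_f :: "nat \<Rightarrow> int" and pv_g :: "nat \<Rightarrow> int" where
  "pv_f 0 = 1"
| "pv_f (Suc n) =
     (\<Sum>k\<in>{k. 2*k+1 \<le> n}. int (n choose (2*k)) * pv_f (2*k) * pv_f (n - 2*k))
     + (if even n then pv_f n else pv_g n)"
| "pv_g 0 = 1"
| "pv_g (Suc n) =
     (\<Sum>k\<in>{k. 2*k+2 \<le> n}. int (n choose (2*k)) * pv_f (2*k) * (pv_f (n - 2*k) - pv_g (n - 2*k)))
     + (if even n then pv_f n else pv_g n)"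
  by pat_completeness auto
termination
  by (relation "measure (\<lambda>x. case x of Inl n \<Rightarrow> n | Inr n \<Rightarrow> n)") auto

definition F1 :: "real fps" where
  "F1 = Abs_fps (\<lambda>n. if odd n then of_int (pv_f n) / fact n else 0)"
definition F2 :: "real fps" where
  "F2 = Abs_fps (\<lambda>n. if even n then of_int (pv_f n) / fact n else 0)"
definition G1 :: "real fps" where
  "G1 = Abs_fps (\<lambda>n. if odd n then of_int (pv_g n) / fact n else 0)"
definition G2 :: "real fps" where
  "G2 = Abs_fps (\<lambda>n. if even n then of_int (pv_g n) / fact n else 0)"

definition fps_sinh :: "real \<Rightarrow> real fps" where
  "fps_sinh c = (fps_exp c - fps_exp (- c)) * fps_const (1/2)"
definition fps_cosh :: "real \<Rightarrow> real fps" where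
  "fps_cosh c = (fps_exp c + fps_exp (- c)) * fps_const (1/2)"

definition Delta :: "real fps" where
  "Delta = fps_const 3 * fps_cos 1 + fps_const 4 - fps_cosh (sqrt 3)"

end

theory Submission
  imports Defs
begin

unbundle fps_syntax


lemma sum_even_reindex:
  fixes h :: "nat \<Rightarrow> 'a::comm_monoid_add"
  shows "(\<Sum>k\<in>{k. 2*k+1 \<le> n}. h (2*k)) = (\<Sum>i<n. if even i then h i else 0)"
proof -
  have "(\<Sum>i<n. if even i then h i else 0) = (\<Sum>i\<in>{i\<in>{..<n}. even i}. h i)"
    by (rule sum.inter_filter[symmetric]) simp
  also have "\<dots> = (\<Sum>k\<in>{k. 2*k+1 \<le> n}. h (2*k))"
  proof (rule sum.reindex_bij_witness[where j="\<lambda>i. i div 2" and i="\<lambda>k. 2*k"])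
  qed (auto elim!: evenE)
  finally show ?thesis by simp
qed

lemma sum_even_reindex2:
  fixes h :: "nat \<Rightarrow> 'a::comm_monoid_add"
  shows "(\<Sum>k\<in>{k. 2*k+2 \<le> n}. h (2*k)) = (\<Sum>i<n-1. if even i then h i else 0)"
proof -
  have "{k. 2*k+2 \<le> n} = {k. 2*k+1 \<le> n - 1}" by auto
  thus ?thesis using sum_even_reindex[of h "n-1"] by simp
qed


lemmas pvf_Suc = pv_f.simps(2)
lemmas pvg_Suc = pv_g.simps(2)
declare pv_f.simps(2)[simp del] pv_g.simps(2)[simp del]

lemma sum_even_reindex':
  fixes h :: "nat \<Rightarrow> 'a::comm_monoid_add"
  shows "(\<Sum>k\<in>{k. Suc (2*k) \<le> n}. h (2*k)) = (\<Sum>i<n. if even i then h i else 0)"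
  using sum_even_reindex[of h n] by simp
lemma sum_even_reindex2':
  fixes h :: "nat \<Rightarrow> 'a::comm_monoid_add"
  shows "(\<Sum>k\<in>{k. Suc (Suc (2*k)) \<le> n}. h (2*k)) = (\<Sum>i<n - Suc 0. if even i then h i else 0)"
  using sum_even_reindex2[of h n] by simp

lemma if0_div: "(if P then a else 0) / (d::real) = (if P then a / d else 0)" by simp

lemma F1_nth: "F1 $ n = (if odd n then of_int (pv_f n) / fact n else 0)" by (simp add: F1_def)
lemma F2_nth: "F2 $ n = (if even n then of_int (pv_f n) / fact n else 0)" by (simp add: F2_def)
lemma G1_nth: "G1 $ n = (if odd n then of_int (pv_g n) / fact n else 0)" by (simp add: G1_def)
lemma G2_nth: "G2 $ n = (if even n then of_int (pv_g n) / fact n else 0)" by (simp add: G2_def)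

lemma choose_div: "i \<le> n \<Longrightarrow> real (n choose i) * x / fact n = x / (fact i * fact (n-i))"
  by (simp add: binomial_fact)

lemma deriv_fact: "of_nat (n+1) * (x / fact (Suc n)) = (x / fact n :: real)"
  by (simp add: fact_Suc del: of_nat_Suc)

lemma pf1: "pv_f (Suc 0) = 1" and pg1: "pv_g (Suc 0) = 1"
  by (simp_all add: pvf_Suc pvg_Suc)

lemma sum_split_last: "(\<Sum>i=0..(n::nat). t i) = (\<Sum>i<n. t i) + (t n :: real)"
proof -
  have "{0..n} = insert n {..<n}" by auto
  thus ?thesis by simp
qed


abbreviation ff where "ff i \<equiv> real_of_int (pv_f i)"
abbreviation gg where "gg i \<equiv> real_of_int (pv_g i)"

lemma rec_f: "ff (Suc n) / fact n =
  (\<Sum>i<n. if even i then ff i * ff (n-i) / (fact i * fact (n-i)) else 0)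
  + (if even n then ff n else gg n) / fact n"
proof -
  have "ff (Suc n) = (\<Sum>i<n. if even i then real (n choose i) * (ff i * ff (n-i)) else 0) + (if even n then ff n else gg n)"
    by (simp add: pvf_Suc sum_even_reindex'[where h="\<lambda>i. real (n choose i) * (ff i * ff (n - i))", symmetric] of_int_sum mult.assoc)
  hence "ff (Suc n) / fact n = (\<Sum>i<n. if even i then real (n choose i) * (ff i * ff (n-i)) / fact n else 0) + (if even n then ff n else gg n) / fact n"
    by (simp add: add_divide_distrib sum_divide_distrib if0_div)
  also have "\<dots> = (\<Sum>i<n. if even i then ff i * ff (n-i) / (fact i * fact (n-i)) else 0) + (if even n then ff n else gg n) / fact n"
    by (intro arg_cong2[where f="(+)"] sum.cong refl) (simp add: choose_div)
  finally show ?thesis .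
qed

lemma rec_g: "gg (Suc n) / fact n =
  (\<Sum>i<n-1. if even i then ff i * (ff (n-i) - gg (n-i)) / (fact i * fact (n-i)) else 0)
  + (if even n then ff n else gg n) / fact n"
proof -
  have "gg (Suc n) = (\<Sum>i<n-1. if even i then real (n choose i) * (ff i * (ff (n-i) - gg (n-i))) else 0) + (if even n then ff n else gg n)"
    by (simp add: pvg_Suc sum_even_reindex2'[where h="\<lambda>i. real (n choose i) * (ff i * (ff (n-i) - gg (n - i)))", symmetric] of_int_sum mult.assoc)
  hence "gg (Suc n) / fact n = (\<Sum>i<n-1. if even i then real (n choose i) * (ff i * (ff (n-i) - gg (n-i))) / fact n else 0) + (if even n then ff n else gg n) / fact n"
    by (simp add: add_divide_distrib sum_divide_distrib if0_div)
  also have "\<dots> = (\<Sum>i<n-1. if even i then ff i * (ff (n-i) - gg (n-i)) / (fact i * fact (n-i)) else 0) + (if even n then ff n else gg n) / fact n"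
    by (intro arg_cong2[where f="(+)"] sum.cong refl) (simp add: choose_div)
  finally show ?thesis .
qed

lemma sum_drop_odd: "(\<And>i. odd i \<Longrightarrow> T i = 0) \<Longrightarrow> even n \<Longrightarrow> (\<Sum>i<n. T i) = (\<Sum>i<n-1. (T i :: real))" for n :: nat
  by (cases n) (auto simp: lessThan_Suc)

lemma sum_drop_last: "T (n-1) = 0 \<Longrightarrow> n > 0 \<Longrightarrow> (\<Sum>i<n. T i) = (\<Sum>i<n-1. (T i :: real))" for n :: nat
  by (cases n) (auto simp: lessThan_Suc)

lemma E1: "fps_deriv F1 = F2^2"
proof (rule fps_ext)
  fix n
  show "fps_deriv F1 $ n = (F2^2) $ n"
  proof (cases "even n")
    case True
    have L: "fps_deriv F1 $ n = ff (Suc n) / fact n"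
      using True by (simp only: fps_deriv_nth F1_nth Suc_eq_plus1[symmetric] deriv_fact) simp
    define T where "T i = (if even i then ff i * ff (n-i) / (fact i * fact (n-i)) else (0::real))" for i
    have "(F2^2) $ n = (\<Sum>i=0..n. F2$i * F2$(n-i))" by (simp add: power2_eq_square fps_mult_nth)
    also have "\<dots> = (\<Sum>i=0..n. T i)"
      by (rule sum.cong) (use True in \<open>auto simp: T_def F2_nth\<close>)
    also have "\<dots> = (\<Sum>i<n. T i) + ff n / fact n"
      by (simp add: sum_split_last T_def True)
    finally show ?thesis using L rec_f[of n] True by (simp add: T_def)
  next
    case False
    have L: "fps_deriv F1 $ n = 0" using False by (simp add: F1_nth)
    have "(F2^2) $ n = (\<Sum>i=0..n. F2$i * F2$(n-i))" by (simp add: power2_eq_square fps_mult_nth)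
    also have "\<dots> = 0"
      by (rule sum.neutral) (use False in \<open>auto simp: F2_nth\<close>)
    finally show ?thesis using L by simp
  qed
qed

lemma E2: "fps_deriv F2 = F1 * F2 + G1"
proof (rule fps_ext)
  fix n
  show "fps_deriv F2 $ n = (F1 * F2 + G1) $ n"
  proof (cases "odd n")
    case True
    have L: "fps_deriv F2 $ n = ff (Suc n) / fact n"
      using True by (simp only: fps_deriv_nth F2_nth Suc_eq_plus1[symmetric] deriv_fact) simp
    define T where "T i = (if even i then ff i * ff (n-i) / (fact i * fact (n-i)) else (0::real))" for i
    have "(F1 * F2) $ n = (\<Sum>i=0..n. F2$i * F1$(n-i))" by (simp add: mult.commute[of F1] fps_mult_nth)
    also have "\<dots> = (\<Sum>i=0..n. T i)"
      by (rule sum.cong) (use True in \<open>auto simp: T_def F1_nth F2_nth\<close>)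
    also have "\<dots> = (\<Sum>i<n. T i)"
      by (simp add: sum_split_last T_def True)
    finally show ?thesis using L rec_f[of n] True by (simp add: T_def G1_nth add_divide_distrib)
  next
    case False
    have L: "fps_deriv F2 $ n = 0" using False by (simp add: F2_nth)
    have "(F1 * F2) $ n = (\<Sum>i=0..n. F1$i * F2$(n-i))" by (simp add: fps_mult_nth)
    also have "\<dots> = 0"
      by (rule sum.neutral) (use False in \<open>auto simp: F1_nth F2_nth\<close>)
    finally show ?thesis using L False by (simp add: G1_nth)
  qed
qed

lemma E3: "fps_deriv G1 = F2 * (F2 - G2) + F2"
proof (rule fps_ext)
  fix n
  show "fps_deriv G1 $ n = (F2 * (F2 - G2) + F2) $ n"
  proof (cases "even n")
    case True
    have L: "fps_deriv G1 $ n = gg (Suc n) / fact n"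
      using True by (simp only: fps_deriv_nth G1_nth Suc_eq_plus1[symmetric] deriv_fact) simp
    define T where "T i = (if even i then ff i * (ff (n-i) - gg (n-i)) / (fact i * fact (n-i)) else (0::real))" for i
    have "(F2 * (F2 - G2)) $ n = (\<Sum>i=0..n. F2$i * (F2 - G2)$(n-i))" by (simp add: fps_mult_nth)
    also have "\<dots> = (\<Sum>i=0..n. T i)"
      by (rule sum.cong) (use True in \<open>auto simp: T_def F2_nth G2_nth field_simps\<close>)
    also have "\<dots> = (\<Sum>i<n. T i)"
      by (simp add: sum_split_last T_def True)
    also have "\<dots> = (\<Sum>i<n-1. T i)"
      by (rule sum_drop_odd) (auto simp: T_def True)
    finally show ?thesis using L rec_g[of n] True by (simp add: T_def F2_nth add_divide_distrib)
  next
    case False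
    have L: "fps_deriv G1 $ n = 0" using False by (simp add: G1_nth)
    have "(F2 * (F2 - G2)) $ n = (\<Sum>i=0..n. F2$i * (F2 - G2)$(n-i))" by (simp add: fps_mult_nth)
    also have "\<dots> = 0"
      by (rule sum.neutral) (use False in \<open>auto simp: F2_nth G2_nth\<close>)
    finally show ?thesis using L False by (simp add: F2_nth)
  qed
qed

lemma E4: "fps_deriv G2 = F2 * (F1 - G1) + G1"
proof (rule fps_ext)
  fix n
  show "fps_deriv G2 $ n = (F2 * (F1 - G1) + G1) $ n"
  proof (cases "odd n")
    case True
    have L: "fps_deriv G2 $ n = gg (Suc n) / fact n"
      using True by (simp only: fps_deriv_nth G2_nth Suc_eq_plus1[symmetric] deriv_fact) simp
    define T where "T i = (if even i then ff i * (ff (n-i) - gg (n-i)) / (fact i * fact (n-i)) else (0::real))" for i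
    have "(F2 * (F1 - G1)) $ n = (\<Sum>i=0..n. F2$i * (F1 - G1)$(n-i))" by (simp add: fps_mult_nth)
    also have "\<dots> = (\<Sum>i=0..n. T i)"
      by (rule sum.cong) (use True in \<open>auto simp: T_def F2_nth F1_nth G1_nth field_simps\<close>)
    also have "\<dots> = (\<Sum>i<n. T i)"
      by (simp add: sum_split_last T_def True)
    also have "\<dots> = (\<Sum>i<n-1. T i)"
    proof (rule sum_drop_last)
      have "n - (n - 1) = 1" using True by (cases n) auto
      thus "T (n-1) = 0" by (simp add: T_def pf1 pg1)
    qed (use True in \<open>cases n; auto\<close>)
    finally show ?thesis using L rec_g[of n] True by (simp add: T_def G1_nth add_divide_distrib)
  next
    case False
    have L: "fps_deriv G2 $ n = 0" using False by (simp add: G2_nth)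
    have "(F2 * (F1 - G1)) $ n = (\<Sum>i=0..n. F2$i * (F1 - G1)$(n-i))" by (simp add: fps_mult_nth)
    also have "\<dots> = 0"
      by (rule sum.neutral) (use False in \<open>auto simp: F1_nth F2_nth G1_nth\<close>)
    finally show ?thesis using L False by (simp add: G1_nth)
  qed
qed





lemma K:
  fixes s c S C R h :: "real fps"
  assumes ds: "fps_deriv s = h * c" and dc: "fps_deriv c = - (h * s)"
    and dS: "fps_deriv S = h * R * C" and dC: "fps_deriv C = h * R * S"
    and dR: "fps_deriv R = 0" and dh: "fps_deriv h = 0"
    and r1: "s^2 + c^2 = 1" and r2: "C^2 - S^2 = 1" and r3: "R^2 = 3" and r4: "2 * h = 1"
  defines "N1 \<equiv> 2*R*S*C + 6*s*c"
    and "N2 \<equiv> 2*R*s*S + 6*c*C"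
    and "N3 \<equiv> 4*R*c*S"
    and "N4 \<equiv> 6*c*C + 2*R*s*S + 2 - 2*(C^2+S^2)"
    and "D \<equiv> 3*(c^2 - s^2) + 4 - (C^2 + S^2)"
  shows "fps_deriv N1 * D - N1 * fps_deriv D = N2^2"
    and "fps_deriv N2 * D - N2 * fps_deriv D = N1 * N2 + N3 * D"
    and "fps_deriv N3 * D - N3 * fps_deriv D = N2 * (N2 - N4) + N2 * D"
    and "fps_deriv N4 * D - N4 * fps_deriv D = N2 * (N1 - N3) + N3 * D"
  unfolding N1_def N2_def N3_def N4_def D_def
  using r1 r2 r3 r4
  by (simp only: power2_eq_square fps_deriv_mult fps_deriv_add fps_deriv_sub fps_deriv_numeral fps_deriv_neg ds dc dS dC dR dh; algebra)+



lemma sinh_deriv: "fps_deriv (fps_sinh x) = fps_const x * fps_cosh x"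
  by (simp add: fps_sinh_def fps_cosh_def algebra_simps flip: fps_const_neg)

lemma cosh_deriv: "fps_deriv (fps_cosh x) = fps_const x * fps_sinh x"
  by (simp add: fps_sinh_def fps_cosh_def algebra_simps flip: fps_const_neg)

lemma half2: "2 * fps_const (1/2::real) = 1"
  by (simp add: numeral_fps_const)

lemma exp_inv: "fps_exp x * fps_exp (-x) = (1::real fps)"
  using fps_exp_add_mult[of x "-x"] by simp

lemma sinh_double: "fps_sinh (2*x) = 2 * fps_sinh x * fps_cosh x"
proof -
  have e1: "fps_exp (2*x) = fps_exp x * fps_exp x" using fps_exp_add_mult[of x x] by simp
  have e2: "fps_exp (-(2*x)) = fps_exp (-x) * fps_exp (-x)" using fps_exp_add_mult[of "-x" "-x"] by simp
  show ?thesis unfolding fps_sinh_def fps_cosh_def e1 e2 using half2[symmetric]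
    by algebra
qed

lemma cosh_double: "fps_cosh (2*x) = fps_cosh x ^ 2 + fps_sinh x ^ 2"
proof -
  have e1: "fps_exp (2*x) = fps_exp x * fps_exp x" using fps_exp_add_mult[of x x] by simp
  have e2: "fps_exp (-(2*x)) = fps_exp (-x) * fps_exp (-x)" using fps_exp_add_mult[of "-x" "-x"] by simp
  show ?thesis unfolding fps_sinh_def fps_cosh_def e1 e2 using half2 exp_inv[of x]
    by algebra
qed

lemma cosh_sq: "fps_cosh x ^ 2 - fps_sinh x ^ 2 = 1"
  unfolding fps_sinh_def fps_cosh_def using half2 exp_inv[of x]
  by algebra

lemma quot_gen:
  fixes N D I X :: "real fps"
  assumes "D * I = 1" "fps_deriv I = - fps_deriv D * I^2" "fps_deriv N * D - N * fps_deriv D = X"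
  shows "fps_deriv (N * I) = X * I^2"
  using assms by (simp only: fps_deriv_mult) algebra

lemma mult_nth_cong:
  assumes "\<forall>i\<le>n. a $ i = a' $ i" "\<forall>i\<le>n. b $ i = b' $ i"
  shows "(a * b) $ n = (a' * b') $ n"
  using assms by (simp add: fps_mult_nth)

lemma uniq:
  fixes A1 A2 B1 B2 :: "real fps"
  assumes d1: "fps_deriv A1 = A2^2" and d2: "fps_deriv A2 = A1 * A2 + B1"
    and d3: "fps_deriv B1 = A2 * (A2 - B2) + A2" and d4: "fps_deriv B2 = A2 * (A1 - B1) + B1"
    and i: "A1 $ 0 = 0" "A2 $ 0 = 1" "B1 $ 0 = 0" "B2 $ 0 = 1"
  shows "A1 = F1 \<and> A2 = F2 \<and> B1 = G1 \<and> B2 = G2"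
proof -
  have "\<forall>m\<le>n. A1 $ m = F1 $ m \<and> A2 $ m = F2 $ m \<and> B1 $ m = G1 $ m \<and> B2 $ m = G2 $ m" for n
  proof (induction n)
    case 0
    then show ?case using i by (simp add: F1_nth F2_nth G1_nth G2_nth pv_f.simps(1) pv_g.simps(1))
  next
    case (Suc n)
    have a1: "\<forall>i\<le>n. A1 $ i = F1 $ i" and a2: "\<forall>i\<le>n. A2 $ i = F2 $ i"
      and b1: "\<forall>i\<le>n. B1 $ i = G1 $ i" and b2: "\<forall>i\<le>n. B2 $ i = G2 $ i" using Suc.IH by auto
    have a12: "\<forall>i\<le>n. (A1 - B1) $ i = (F1 - G1) $ i" and a22: "\<forall>i\<le>n. (A2 - B2) $ i = (F2 - G2) $ i"
      using a1 a2 b1 b2 by auto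
    have key: "\<And>X Y. fps_deriv X = P \<Longrightarrow> fps_deriv Y = Q \<Longrightarrow> P $ n = Q $ n \<Longrightarrow> X $ Suc n = (Y::real fps) $ Suc n" for P Q
    proof -
      fix X Y :: "real fps"
      assume "fps_deriv X = P" "fps_deriv Y = Q" "P $ n = Q $ n"
      hence "of_nat (n+1) * X $ (n+1) = of_nat (n+1) * Y $ (n+1)"
        using fps_deriv_nth[of X n] fps_deriv_nth[of Y n] by simp
      thus "X $ Suc n = Y $ Suc n" by simp
    qed
    have "A1 $ Suc n = F1 $ Suc n"
      by (rule key[OF d1 E1]) (simp add: power2_eq_square mult_nth_cong[OF a2 a2])
    moreover have "A2 $ Suc n = F2 $ Suc n"
      by (rule key[OF d2 E2]) (simp add: mult_nth_cong[OF a1 a2] b1)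
    moreover have "B1 $ Suc n = G1 $ Suc n"
      by (rule key[OF d3 E3]) (simp add: mult_nth_cong[OF a2 a22] a2)
    moreover have "B2 $ Suc n = G2 $ Suc n"
      by (rule key[OF d4 E4]) (simp add: mult_nth_cong[OF a2 a12] b1)
    ultimately show ?case using Suc.IH by (auto simp: le_Suc_eq)
  qed
  thus ?thesis by (auto simp: fps_eq_iff)
qed



theorem lemma4:
  shows "fps_deriv F1 = F2 ^ 2
    \<and> fps_deriv F2 = F1 * F2 + G1
    \<and> fps_deriv G1 = F2 * (F2 - G2) + F2
    \<and> fps_deriv G2 = F2 * (F1 - G1) + G1
    \<and> fps_nth F1 0 = 0 \<and> fps_nth G1 0 = 0
    \<and> fps_nth F2 0 = 1 \<and> fps_nth G2 0 = 1
    \<and> F1 = (fps_const (sqrt 3) * fps_sinh (sqrt 3) + fps_const 3 * fps_sin 1) * inverse Delta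
    \<and> F2 = (fps_const (2 * sqrt 3) * fps_sin (1/2) * fps_sinh (sqrt 3 / 2)
           + fps_const 6 * fps_cos (1/2) * fps_cosh (sqrt 3 / 2)) * inverse Delta
    \<and> G1 = (fps_const (4 * sqrt 3) * fps_cos (1/2) * fps_sinh (sqrt 3 / 2)) * inverse Delta
    \<and> G2 = (fps_const 6 * fps_cos (1/2) * fps_cosh (sqrt 3 / 2)
           + fps_const (2 * sqrt 3) * fps_sin (1/2) * fps_sinh (sqrt 3 / 2)
           + fps_const 2 - fps_const 2 * fps_cosh (sqrt 3)) * inverse Delta"
proof -
  define s where "s = fps_sin (1/2::real)"
  define c where "c = fps_cos (1/2::real)"
  define S where "S = fps_sinh (sqrt 3 / 2)"
  define C where "C = fps_cosh (sqrt 3 / 2)"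
  define R where "R = fps_const (sqrt 3 :: real)"
  define h where "h = fps_const (1/2 :: real)"
  define N1 where "N1 = fps_const (sqrt 3) * fps_sinh (sqrt 3) + fps_const 3 * fps_sin 1"
  define N2 where "N2 = fps_const (2 * sqrt 3) * fps_sin (1/2) * fps_sinh (sqrt 3 / 2)
           + fps_const 6 * fps_cos (1/2) * fps_cosh (sqrt 3 / 2)"
  define N3 where "N3 = fps_const (4 * sqrt 3) * fps_cos (1/2) * fps_sinh (sqrt 3 / 2)"
  define N4 where "N4 = fps_const 6 * fps_cos (1/2) * fps_cosh (sqrt 3 / 2)
           + fps_const (2 * sqrt 3) * fps_sin (1/2) * fps_sinh (sqrt 3 / 2)
           + fps_const 2 - fps_const 2 * fps_cosh (sqrt 3)"
  define I where "I = inverse Delta"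
  have ds: "fps_deriv s = h * c" by (simp add: s_def h_def c_def fps_sin_deriv)
  have dc: "fps_deriv c = - (h * s)" by (simp add: s_def h_def c_def fps_cos_deriv flip: fps_const_neg)
  have hR: "h * R = fps_const (sqrt 3 / 2)" by (simp add: h_def R_def)
  have dS: "fps_deriv S = h * R * C" unfolding hR by (simp add: S_def C_def sinh_deriv)
  have dC: "fps_deriv C = h * R * S" unfolding hR by (simp add: S_def C_def cosh_deriv)
  have dR: "fps_deriv R = 0" and dh: "fps_deriv h = 0" by (simp_all add: R_def h_def)
  have r1: "s^2 + c^2 = 1" using fps_sin_cos_sum_of_squares[of "1/2::real"] by (simp add: s_def c_def add.commute)
  have r2: "C^2 - S^2 = 1" by (simp add: S_def C_def cosh_sq)
  have r3: "R^2 = 3" by (simp add: R_def numeral_fps_const)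
  have r4: "2 * h = 1" by (simp add: h_def half2)
  have sin1: "fps_sin 1 = 2*s*c" using fps_sin_add[of "1/2::real" "1/2"] by (simp add: s_def c_def)
  have cos1: "fps_cos 1 = c^2 - s^2" using fps_cos_add[of "1/2::real" "1/2"] by (simp add: s_def c_def power2_eq_square)
  have sq3: "sqrt 3 = 2 * (sqrt 3 / 2)" by simp
  have sinh3: "fps_sinh (sqrt 3) = 2*S*C" by (subst sq3) (simp only: sinh_double S_def C_def)
  have cosh3: "fps_cosh (sqrt 3) = C^2 + S^2" by (subst sq3) (simp only: cosh_double S_def C_def add.commute)
  have k2: "fps_const (2 * sqrt 3) = 2 * R" and k4: "fps_const (4 * sqrt 3) = 4 * R"
    by (simp_all add: R_def numeral_fps_const)
  have n3: "fps_const 3 = (3::real fps)" and n4: "fps_const 4 = (4::real fps)"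
    and n6: "fps_const 6 = (6::real fps)" and n2: "fps_const 2 = (2::real fps)"
    by (simp_all add: numeral_fps_const)
  have eqD: "Delta = 3*(c^2 - s^2) + 4 - (C^2 + S^2)"
    unfolding Delta_def cos1 cosh3 n3 n4 ..
  have eqN1: "N1 = 2*R*S*C + 6*s*c"
    unfolding N1_def sinh3 sin1 n3 R_def[symmetric] by (rule refl | algebra)
  have eqN2: "N2 = 2*R*s*S + 6*c*C"
    unfolding N2_def k2 n6 s_def[symmetric] c_def[symmetric] S_def[symmetric] C_def[symmetric] by (rule refl | algebra)
  have eqN3: "N3 = 4*R*c*S"
    unfolding N3_def k4 s_def[symmetric] c_def[symmetric] S_def[symmetric] C_def[symmetric] by (rule refl | algebra)
  have eqN4: "N4 = 6*c*C + 2*R*s*S + 2 - 2*(C^2+S^2)"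
    unfolding N4_def k2 n6 n2 cosh3 s_def[symmetric] c_def[symmetric] S_def[symmetric] C_def[symmetric] by (rule refl | algebra)
  note KK = K[OF ds dc dS dC dR dh r1 r2 r3 r4]
  have K1: "fps_deriv N1 * Delta - N1 * fps_deriv Delta = N2^2"
    unfolding eqN1 eqN2 eqD by (rule KK(1))
  have K2: "fps_deriv N2 * Delta - N2 * fps_deriv Delta = N1 * N2 + N3 * Delta"
    unfolding eqN1 eqN2 eqN3 eqD by (rule KK(2))
  have K3: "fps_deriv N3 * Delta - N3 * fps_deriv Delta = N2 * (N2 - N4) + N2 * Delta"
    unfolding eqN4 eqN2 eqN3 eqD by (rule KK(3))
  have K4: "fps_deriv N4 * Delta - N4 * fps_deriv Delta = N2 * (N1 - N3) + N3 * Delta"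
    unfolding eqN1 eqN2 eqN3 eqN4 eqD by (rule KK(4))
  have D0: "Delta $ 0 = 6" by (simp add: Delta_def fps_cosh_def)
  have DI: "Delta * I = 1" unfolding I_def by (rule inverse_mult_eq_1') (simp add: D0)
  have dI: "fps_deriv I = - fps_deriv Delta * I^2" unfolding I_def by (rule fps_inverse_deriv) (simp add: D0)
  have P1: "fps_deriv (N1 * I) = (N2 * I)^2"
    using quot_gen[OF DI dI K1] by (simp add: power_mult_distrib)
  have P2: "fps_deriv (N2 * I) = (N1 * I) * (N2 * I) + N3 * I"
    using quot_gen[OF DI dI K2] DI by algebra
  have P3: "fps_deriv (N3 * I) = (N2 * I) * ((N2 * I) - (N4 * I)) + N2 * I"
    using quot_gen[OF DI dI K3] DI by algebra
  have P4: "fps_deriv (N4 * I) = (N2 * I) * ((N1 * I) - (N3 * I)) + N3 * I"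
    using quot_gen[OF DI dI K4] DI by algebra
  have I0: "I $ 0 = 1/6" by (simp add: I_def D0)
  have i1: "(N1 * I) $ 0 = 0" by (simp add: N1_def I0 fps_sinh_def)
  have i2: "(N2 * I) $ 0 = 1" by (simp add: N2_def I0 fps_sinh_def fps_cosh_def)
  have i3: "(N3 * I) $ 0 = 0" by (simp add: N3_def I0 fps_sinh_def)
  have i4: "(N4 * I) $ 0 = 1" by (simp add: N4_def I0 fps_sinh_def fps_cosh_def)
  have U: "N1 * I = F1 \<and> N2 * I = F2 \<and> N3 * I = G1 \<and> N4 * I = G2"
    by (rule uniq[OF P1 P2 P3 P4 i1 i2 i3 i4])
  have iv: "fps_nth F1 0 = 0 \<and> fps_nth G1 0 = 0 \<and> fps_nth F2 0 = 1 \<and> fps_nth G2 0 = 1"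
    using U i1 i2 i3 i4 by auto
  show ?thesis using E1 E2 E3 E4 iv U unfolding N1_def N2_def N3_def N4_def I_def by auto
qed

end
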